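(* Fix an integer $k\ge1$, let $\Delta_k:=\log(1/2)/\log(1-2^{-k})$ and fix $\Delta>\Delta_k$. For $n\ge k$ let $m=\lceil\Delta N_k\rceil$ and let the data $(\ell_j,\varepsilon_j)_{j\in[m]}$ be i.i.d., where $\ell_j=(\ell_{j,1},\dots,\ell_{j,k})$ is a uniformly random $k$-tuple of linearly independent linear forms on $\mathbb{F}_2^n$ and $\varepsilon_j\in\mathbb{F}_2^k$ is uniform and independent of $\ell_j$ (so that the flats $V_j=\{x:\ell_{j,i}(x)=\varepsilon_{j,i}\ \forall i\}$ satisfy $V\sim\mathbf{P}_{\text{unif}}$). Then the probability that the linear system $(\mathcal{L}_V)$ has a solution in $\mathbb{F}_2^{N_k}$ tends to $0$ as $n\to\infty$.
   Context: Let $N_k=\sum_{i=0}^k\binom{n}{i}$ and index the coordinates of $\mathbb{F}_2^{N_k}$ by subsets $S\subseteq[n]$ with $|S|\le k$. For linear forms $\ell_1,\dots,\ell_k$ on $\mathbb{F}_2^n$ and $\alpha\in\mathbb{F}_2^k$, expand $P_{\ell,\alpha}(x)=\prod_{i=1}^k(\ell_i(x)+\alpha_i)$ in $\mathbb{F}_2[x_1,\dots,x_n]$ and reduce using $x_s^2=x_s$, obtaining $\sum_{|S|\le k}c_S(\ell,\alpha)\prod_{s\in S}x_s$; define the linear form $\mathcal{L}_{\ell,\alpha}(Y)=\sum_{|S|\le k}c_S(\ell,\alpha)Y_S$ on $\mathbb{F}_2^{N_k}$. Given data $(\ell_j,\varepsilon_j)_{j\in[m]}$ describing flats $V_j$,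 with $\alpha_j:=(1-\varepsilon_{j,i})_{i\in[k]}$, the system $(\mathcal{L}_V)$ is the system of $m+1$ linear equations in $Y\in\mathbb{F}_2^{N_k}$: $\mathcal{L}_{\ell_j,\alpha_j}(Y)=0$ for all $j\in[m]$, and $Y_\emptyset=1$. $\mathbf{P}_{\text{unif}}$ is the law of $m$ i.i.d. uniform affine subspaces of $\mathbb{F}_2^n$ of dimension $n-k$. *)

theory Defs
  imports "HOL-Probability.Probability"
begin

text \<open>A vector of F_2^n (a point, or a linear form) is encoded by its support,
a subset of {..<n}.
Elements of F_2 are booleans (True = 1). A k-tuple of linear forms is a function
nat \<Rightarrow> nat set, extensional (empty) outside {..<k}; similarly for vectors in F_2^k.\<close>

definition lin_form :: "nat set \<Rightarrow> nat set \<Rightarrow> bool" where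
  "lin_form L x = odd (card (L \<inter> x))"

definition lin_indep_forms :: "nat \<Rightarrow> nat \<Rightarrow> (nat \<Rightarrow> nat set) \<Rightarrow> bool" where
  "lin_indep_forms n k L \<longleftrightarrow>
     (\<forall>I \<subseteq> {..<k}. I \<noteq> {} \<longrightarrow> (\<exists>s<n. odd (card {i\<in>I. s \<in> L i})))"

definition flat_data :: "nat \<Rightarrow> nat \<Rightarrow> ((nat \<Rightarrow> nat set) \<times> (nat \<Rightarrow> bool)) set" where
  "flat_data n k = {(L, eps).
      (\<forall>i<k. L i \<subseteq> {..<n}) \<and> (\<forall>i\<ge>k. L i = {}) \<and> lin_indep_forms n k L \<and>
      (\<forall>i\<ge>k. eps i = False)}"

text \<open>Expanding \<Prod>i<k. (\<Sum>s\<in>L i. x_s + \<alpha> i) by distributivity: each term picks, for every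
factor i, either the constant \<alpha> i (None) or a variable x_s with s \<in> L i (Some s).
After reducing x_s^2 = x_s, the term is the monomial \<Prod>{x_s | s chosen} times the product
of the chosen constants.\<close>
definition expansion_choices :: "nat \<Rightarrow> (nat \<Rightarrow> nat set) \<Rightarrow> (nat \<Rightarrow> nat option) set" where
  "expansion_choices k L = {\<sigma>. (\<forall>i<k. \<sigma> i = None \<or> (\<exists>s\<in>L i. \<sigma> i = Some s)) \<and>
                                (\<forall>i\<ge>k. \<sigma> i = None)}"

definition coef :: "nat \<Rightarrow> (nat \<Rightarrow> nat set) \<Rightarrow> (nat \<Rightarrow> bool) \<Rightarrow> nat set \<Rightarrow> bool" where
  "coef k L \<alpha> S = odd (card {\<sigma> \<in> expansion_choices k L.
       (\<forall>i<k. \<sigma> i = None \<longrightarrow> \<alpha> i) \<and> {s. \<exists>i<k. \<sigma> i = Some s} = S})"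

definition monomial_index :: "nat \<Rightarrow> nat \<Rightarrow> nat set set" where
  "monomial_index n k = {S. S \<subseteq> {..<n} \<and> card S \<le> k}"

definition Nk :: "nat \<Rightarrow> nat \<Rightarrow> nat" where
  "Nk n k = (\<Sum>i\<le>k. n choose i)"

definition lin_functional :: "nat \<Rightarrow> nat \<Rightarrow> (nat \<Rightarrow> nat set) \<Rightarrow> (nat \<Rightarrow> bool) \<Rightarrow> (nat set \<Rightarrow> bool) \<Rightarrow> bool" where
  "lin_functional n k L \<alpha> Y = odd (card {S \<in> monomial_index n k. coef k L \<alpha> S \<and> Y S})"

text \<open>Solvability of the system (\<L>_V) for data d, with \<alpha>_j = 1 - \<epsilon>_j.\<close>
definition system_solvable :: "nat \<Rightarrow> nat \<Rightarrow> nat \<Rightarrow> (nat \<Rightarrow> (nat \<Rightarrow> nat set) \<times> (nat \<Rightarrow> bool)) \<Rightarrow> bool" where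
  "system_solvable n k m d \<longleftrightarrow>
     (\<exists>Y :: nat set \<Rightarrow> bool. Y {} \<and>
        (\<forall>j<m. \<not> lin_functional n k (fst (d j)) (\<lambda>i. \<not> snd (d j) i) Y))"

definition data_pmf :: "nat \<Rightarrow> nat \<Rightarrow> nat \<Rightarrow> (nat \<Rightarrow> (nat \<Rightarrow> nat set) \<times> (nat \<Rightarrow> bool)) pmf" where
  "data_pmf n k m = Pi_pmf {..<m} (\<lambda>_. {}, \<lambda>_. False) (\<lambda>_. pmf_of_set (flat_data n k))"

end

theory Submission
  imports Defs
begin


definition EE :: "nat \<Rightarrow> (nat \<Rightarrow> bool) set" where
  "EE k = {eps. \<forall>i\<ge>k. \<not> eps i}"

lemma EE_sub: "EE k \<subseteq> (\<lambda>T i. i \<in> T) ` Pow {..<k}"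
proof
  fix e assume "e \<in> EE k"
  then have "e = (\<lambda>i. i \<in> {i. i<k \<and> e i})" unfolding EE_def fun_eq_iff by (metis mem_Collect_eq not_less)
  then show "e \<in> (\<lambda>T i. i \<in> T) ` Pow {..<k}" by blast
qed

lemma finite_EE: "finite (EE k)"
  using EE_sub by (rule finite_subset) auto

lemma card_EE: "card (EE k) \<le> 2^k"
proof -
  have "card (EE k) \<le> card ((\<lambda>T i. i \<in> T) ` Pow {..<k})"
    using EE_sub by (intro card_mono) auto
  also have "\<dots> \<le> card (Pow {..<k::nat})" by (rule card_image_le) auto
  finally show ?thesis by (simp add: card_Pow)
qed

lemma false_EE: "(\<lambda>_. False) \<in> EE k" by (simp add: EE_def)

lemma finite_EC:
  assumes "\<forall>i<k. finite (L i)"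
  shows "finite (expansion_choices k L)"
proof -
  have "expansion_choices k L \<subseteq> (\<lambda>g i. if i<k then g i else None) `
           (PiE {..<k} (\<lambda>i. insert None (Some ` L i)))"
  proof
    fix \<sigma> assume s: "\<sigma> \<in> expansion_choices k L"
    have "\<sigma> = (\<lambda>i. if i<k then restrict \<sigma> {..<k} i else None)"
      using s by (auto simp: expansion_choices_def not_less)
    moreover have "restrict \<sigma> {..<k} \<in> PiE {..<k} (\<lambda>i. insert None (Some ` L i))"
      using s by (auto simp: expansion_choices_def)
    ultimately show "\<sigma> \<in> (\<lambda>g i. if i<k then g i else None) `
           (PiE {..<k} (\<lambda>i. insert None (Some ` L i)))" by blast
  qed
  then show ?thesis
    by (rule finite_subset) (auto intro!: finite_PiE simp: assms)
qed

definition cons :: "nat \<Rightarrow> (nat \<Rightarrow> bool) \<Rightarrow> (nat \<Rightarrow> nat option) \<Rightarrow> bool" where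
  "cons k eps \<sigma> \<longleftrightarrow> (\<forall>i<k. \<sigma> i = None \<longrightarrow> \<not> eps i)"

lemma flip_even:
  assumes "i0 < k" "\<sigma> i0 \<noteq> None"
  shows "even (card {eps\<in>EE k. cons k eps \<sigma>})"
proof -
  define A where "A = {eps\<in>EE k. cons k eps \<sigma>}"
  define A0 where "A0 = {eps\<in>A. \<not> eps i0}"
  define A1 where "A1 = {eps\<in>A. eps i0}"
  have fA: "finite A" unfolding A_def using finite_EE by auto
  have "A = A0 \<union> A1" "A0 \<inter> A1 = {}" unfolding A0_def A1_def by auto
  then have c: "card A = card A0 + card A1"
    using fA by (metis card_Un_disjoint finite_Un)
  have "bij_betw (\<lambda>f. f(i0 := \<not> f i0)) A0 A1"
  proof (rule bij_betwI[where g="\<lambda>f. f(i0 := \<not> f i0)"])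
    show "(\<lambda>f. f(i0 := \<not> f i0)) \<in> A0 \<rightarrow> A1"
      using assms by (auto simp: A0_def A1_def A_def EE_def cons_def)
    show "(\<lambda>f. f(i0 := \<not> f i0)) \<in> A1 \<rightarrow> A0"
      using assms by (auto simp: A0_def A1_def A_def EE_def cons_def)
  qed auto
  then have "card A0 = card A1" by (rule bij_betw_same_card)
  with c show ?thesis unfolding A_def by simp
qed

lemma all_none:
  assumes "\<forall>i<k. \<sigma> i = None"
  shows "card {eps\<in>EE k. cons k eps \<sigma>} = 1"
proof -
  have "{eps\<in>EE k. cons k eps \<sigma>} = {\<lambda>_. False}"
    using assms by (auto simp: EE_def cons_def not_less) (metis not_less)
  then show ?thesis by simp
qed

lemma card_filter_mod2:
  assumes "finite A"
  shows "card {x\<in>A. odd (f x)} mod 2 = sum f A mod 2"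
proof -
  have "card {x\<in>A. odd (f x)} = (\<Sum>x\<in>A. if odd (f x) then 1 else 0)"
    using assms by (simp add: sum.If_cases) (metis Int_def Collect_conj_eq Collect_mem_eq)
  also have "\<dots> = (\<Sum>x\<in>A. f x mod 2)"
    by (rule sum.cong) (auto simp: odd_iff_mod_2_eq_one even_iff_mod_2_eq_zero)
  finally show ?thesis by (simp add: mod_sum_eq)
qed

lemma card_filter_sum:
  assumes "finite A"
  shows "card {x\<in>A. P x} = (\<Sum>x\<in>A. if P x then 1 else (0::nat))"
  using assms by (simp add: sum.If_cases) (metis Int_def Collect_conj_eq Collect_mem_eq)



lemma finite_MI: "finite (monomial_index n k)"
  by (rule finite_subset[of _ "Pow {..<n}"]) (auto simp: monomial_index_def)

lemma parity:
  assumes L: "\<forall>i<k. L i \<subseteq> {..<n}" and Y: "Y {}"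
  shows "odd (card {eps\<in>EE k. lin_functional n k L (\<lambda>i. \<not> eps i) Y})"
proof -
  define EC where "EC = expansion_choices k L"
  define img where "img = (\<lambda>\<sigma>::nat\<Rightarrow>nat option. {s. \<exists>i<k. \<sigma> i = Some s})"
  define M' where "M' = {S\<in>monomial_index n k. Y S}"
  define c where "c = (\<lambda>eps S. card {\<sigma>\<in>EC. cons k eps \<sigma> \<and> img \<sigma> = S})"
  define h where "h = (\<lambda>\<sigma>. card {eps\<in>EE k. cons k eps \<sigma>})"
  have fEC: "finite EC" unfolding EC_def using L by (intro finite_EC) (meson finite_lessThan finite_subset)
  have fM: "finite M'" unfolding M'_def using finite_MI by auto
  have fE: "finite (EE k)" by (rule finite_EE)
  have lf: "lin_functional n k L (\<lambda>i. \<not> eps i) Y \<longleftrightarrow> odd (card {S\<in>M'. odd (c eps S)})" for eps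
    unfolding lin_functional_def coef_def M'_def c_def EC_def img_def cons_def
    by (rule arg_cong[where f="\<lambda>x. odd (card x)"]) auto
  have cs: "(\<Sum>eps\<in>EE k. c eps S) = (\<Sum>\<sigma>\<in>{\<sigma>\<in>EC. img \<sigma> = S}. h \<sigma>)" for S
  proof -
    have "(\<Sum>eps\<in>EE k. c eps S) = (\<Sum>eps\<in>EE k. \<Sum>\<sigma>\<in>EC. if cons k eps \<sigma> \<and> img \<sigma> = S then 1 else 0)"
      unfolding c_def using fEC by (simp add: card_filter_sum)
    also have "\<dots> = (\<Sum>\<sigma>\<in>EC. \<Sum>eps\<in>EE k. if cons k eps \<sigma> \<and> img \<sigma> = S then 1 else 0)"
      by (rule sum.swap)
    also have "\<dots> = (\<Sum>\<sigma>\<in>EC. if img \<sigma> = S then h \<sigma> else 0)"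
      unfolding h_def using fE by (intro sum.cong) (auto simp: card_filter_sum)
    also have "\<dots> = (\<Sum>\<sigma>\<in>{\<sigma>\<in>EC. img \<sigma> = S}. h \<sigma>)"
      using fEC by (simp add: sum.inter_filter)
    finally show ?thesis .
  qed
  have hm: "h \<sigma> mod 2 = (if \<forall>i<k. \<sigma> i = None then 1 else 0)" for \<sigma>
  proof (cases "\<forall>i<k. \<sigma> i = None")
    case True then show ?thesis unfolding h_def using all_none by simp
  next
    case False
    then obtain i0 where "i0 < k" "\<sigma> i0 \<noteq> None" by blast
    then show ?thesis unfolding h_def using flip_even False by auto
  qed
  have none_EC: "(\<lambda>_. None) \<in> EC" unfolding EC_def expansion_choices_def by auto
  have hs: "(\<Sum>\<sigma>\<in>{\<sigma>\<in>EC. img \<sigma> = S}. h \<sigma>) mod 2 = (if S = {} then 1 else 0)" for S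
  proof -
    define B where "B = {\<sigma>\<in>EC. img \<sigma> = S}"
    have st: "B \<inter> {\<sigma>. \<forall>i<k. \<sigma> i = None} = (if S = {} then {\<lambda>_. None} else {})"
    proof -
      have "\<sigma> = (\<lambda>_. None)" if "\<sigma> \<in> EC" "\<forall>i<k. \<sigma> i = None" for \<sigma>
        using that unfolding EC_def expansion_choices_def by (auto simp: fun_eq_iff) (metis not_less)
      then have sub: "B \<inter> {\<sigma>. \<forall>i<k. \<sigma> i = None} \<subseteq> {\<lambda>_. None}" unfolding B_def by blast
      have mem: "(\<lambda>_. None) \<in> B \<inter> {\<sigma>. \<forall>i<k. \<sigma> i = None} \<longleftrightarrow> S = {}"
        using none_EC by (auto simp: B_def img_def)
      show ?thesis
      proof (cases "S = {}")
        case True then show ?thesis using sub mem by auto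
      next
        case False then show ?thesis using sub mem by auto
      qed
    qed
    have "(\<Sum>\<sigma>\<in>B. h \<sigma>) mod 2 = (\<Sum>\<sigma>\<in>B. h \<sigma> mod 2) mod 2" by (simp only: mod_sum_eq)
    also have "(\<Sum>\<sigma>\<in>B. h \<sigma> mod 2) = (\<Sum>\<sigma>\<in>B. if \<forall>i<k. \<sigma> i = None then 1 else 0)"
      by (rule sum.cong[OF refl]) (rule hm)
    also have "\<dots> = card (B \<inter> {\<sigma>. \<forall>i<k. \<sigma> i = None})"
    proof -
      have fB: "finite B" unfolding B_def using fEC by simp
      have "B \<inter> {\<sigma>. \<forall>i<k. \<sigma> i = None} = {\<sigma>\<in>B. \<forall>i<k. \<sigma> i = None}" by blast
      then show ?thesis by (simp only: card_filter_sum[OF fB])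
    qed
    also have "\<dots> = (if S = {} then 1 else 0)" unfolding st by simp
    finally show ?thesis unfolding B_def by simp
  qed
  have "card {eps\<in>EE k. lin_functional n k L (\<lambda>i. \<not> eps i) Y} mod 2
      = card {eps\<in>EE k. odd (card {S\<in>M'. odd (c eps S)})} mod 2" by (simp add: lf)
  also have "\<dots> = (\<Sum>eps\<in>EE k. card {S\<in>M'. odd (c eps S)}) mod 2"
    using fE by (rule card_filter_mod2)
  also have "\<dots> = (\<Sum>eps\<in>EE k. card {S\<in>M'. odd (c eps S)} mod 2) mod 2"
    by (simp add: mod_sum_eq)
  also have "\<dots> = (\<Sum>eps\<in>EE k. (\<Sum>S\<in>M'. c eps S) mod 2) mod 2"
    using fM by (simp add: card_filter_mod2)
  also have "\<dots> = (\<Sum>eps\<in>EE k. \<Sum>S\<in>M'. c eps S) mod 2"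
    by (simp add: mod_sum_eq)
  also have "\<dots> = (\<Sum>S\<in>M'. \<Sum>eps\<in>EE k. c eps S) mod 2"
    by (subst sum.swap) simp
  also have "\<dots> = (\<Sum>S\<in>M'. (\<Sum>eps\<in>EE k. c eps S) mod 2) mod 2"
    by (simp add: mod_sum_eq)
  also have "\<dots> = (\<Sum>S\<in>M'. if S = {} then 1 else 0) mod 2"
    by (simp add: cs hs)
  also have "\<dots> = 1"
  proof -
    have "{} \<in> M'" unfolding M'_def monomial_index_def using Y by auto
    then show ?thesis using fM by (simp add: sum.If_cases)
  qed
  finally show ?thesis by (simp add: odd_iff_mod_2_eq_one)
qed



definition LS :: "nat \<Rightarrow> nat \<Rightarrow> (nat \<Rightarrow> nat set) set" where
  "LS n k = {L. (\<forall>i<k. L i \<subseteq> {..<n}) \<and> (\<forall>i\<ge>k. L i = {}) \<and> lin_indep_forms n k L}"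

lemma flat_data_eq: "flat_data n k = LS n k \<times> EE k"
  by (auto simp: flat_data_def LS_def EE_def)

lemma finite_LS: "finite (LS n k)"
proof -
  have "LS n k \<subseteq> (\<lambda>g i. if i<k then g i else {}) ` PiE {..<k} (\<lambda>_. Pow {..<n})"
  proof
    fix L assume s: "L \<in> LS n k"
    have "L = (\<lambda>i. if i<k then restrict L {..<k} i else {})"
      using s by (auto simp: LS_def not_less fun_eq_iff)
    moreover have "restrict L {..<k} \<in> PiE {..<k} (\<lambda>_. Pow {..<n})"
      using s by (auto simp: LS_def)
    ultimately show "L \<in> (\<lambda>g i. if i<k then g i else {}) ` PiE {..<k} (\<lambda>_. Pow {..<n})" by blast
  qed
  then show ?thesis by (rule finite_subset) (auto intro!: finite_PiE)
qed

lemma LS_nonempty: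
  assumes "k \<le> n" shows "LS n k \<noteq> {}"
proof -
  define L0 where "L0 = (\<lambda>i::nat. if i<k then {i} else {})"
  have "lin_indep_forms n k L0"
    unfolding lin_indep_forms_def
  proof (intro allI impI)
    fix I assume I: "I \<subseteq> {..<k}" "I \<noteq> {}"
    then obtain i where i: "i \<in> I" by blast
    with I have ik: "i < k" by auto
    have "{j\<in>I. i \<in> L0 j} = {i}" using i I by (auto simp: L0_def)
    then show "\<exists>s<n. odd (card {j\<in>I. s \<in> L0 j})" using ik assms by (intro exI[of _ i]) auto
  qed
  then have "L0 \<in> LS n k" using assms by (auto simp: LS_def L0_def)
  then show ?thesis by blast
qed

lemma one_bound:
  assumes "k \<le> n" "Y {}"
  shows "measure_pmf.prob (pmf_of_set (flat_data n k))
           {x. \<not> lin_functional n k (fst x) (\<lambda>i. \<not> snd x i) Y} \<le> 1 - 1/2^k"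
proof -
  define F where "F = flat_data n k"
  define G where "G = (\<lambda>L. {eps\<in>EE k. \<not> lin_functional n k L (\<lambda>i. \<not> eps i) Y})"
  have fL: "finite (LS n k)" by (rule finite_LS)
  have fE: "finite (EE k)" by (rule finite_EE)
  have F: "F = LS n k \<times> EE k" unfolding F_def by (rule flat_data_eq)
  have fF: "finite F" using F fL fE by simp
  have neF: "F \<noteq> {}" using F LS_nonempty[OF assms(1)] false_EE by auto
  have cE1: "card (EE k) \<ge> 1" using false_EE[of k] fE by (metis card_0_eq empty_iff less_one not_le)
  have cE2: "card (EE k) \<le> 2^k" by (rule card_EE)
  have cL: "card (LS n k) \<ge> 1" using LS_nonempty[OF assms(1)] fL by (metis card_0_eq less_one not_le)
  have Gb: "card (G L) \<le> card (EE k) - 1" if "L \<in> LS n k" for L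
  proof -
    have Lsub: "\<forall>i<k. L i \<subseteq> {..<n}" using that by (auto simp: LS_def)
    define P where "P = {eps\<in>EE k. lin_functional n k L (\<lambda>i. \<not> eps i) Y}"
    have "odd (card P)" unfolding P_def using Lsub assms(2) by (rule parity[of k L n Y])
    then have "card P \<ge> 1" by (cases "card P") auto
    moreover have "card P + card (G L) = card (EE k)"
    proof -
      have "EE k = P \<union> G L" "P \<inter> G L = {}" unfolding P_def G_def by auto
      then show ?thesis using fE by (metis card_Un_disjoint finite_Un)
    qed
    ultimately show ?thesis by linarith
  qed
  have "F \<inter> {x. \<not> lin_functional n k (fst x) (\<lambda>i. \<not> snd x i) Y} = Sigma (LS n k) G"
    unfolding F G_def by (auto simp del: lin_functional_def)
  moreover have "card (Sigma (LS n k) G) = (\<Sum>L\<in>LS n k. card (G L))"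
    by (rule card_SigmaI) (use fL fE in \<open>auto simp: G_def\<close>)
  ultimately have "card (F \<inter> {x. \<not> lin_functional n k (fst x) (\<lambda>i. \<not> snd x i) Y})
      = (\<Sum>L\<in>LS n k. card (G L))" by simp
  also have "\<dots> \<le> (\<Sum>L\<in>LS n k. card (EE k) - 1)" by (rule sum_mono) (rule Gb)
  also have "\<dots> = card (LS n k) * (card (EE k) - 1)" by simp
  finally have numN: "card (F \<inter> {x. \<not> lin_functional n k (fst x) (\<lambda>i. \<not> snd x i) Y})
      \<le> card (LS n k) * (card (EE k) - 1)" .
  have num: "real (card (F \<inter> {x. \<not> lin_functional n k (fst x) (\<lambda>i. \<not> snd x i) Y}))
      \<le> real (card (LS n k)) * (real (card (EE k)) - 1)"
  proof -
    have "real (card (F \<inter> {x. \<not> lin_functional n k (fst x) (\<lambda>i. \<not> snd x i) Y}))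
       \<le> real (card (LS n k) * (card (EE k) - 1))" using numN by (simp only: of_nat_le_iff)
    also have "\<dots> = real (card (LS n k)) * (real (card (EE k)) - 1)" using cE1 by (simp add: of_nat_diff)
    finally show ?thesis .
  qed
  have den: "card F = card (LS n k) * card (EE k)" using F by (simp add: card_cartesian_product)
  have "measure_pmf.prob (pmf_of_set F) {x. \<not> lin_functional n k (fst x) (\<lambda>i. \<not> snd x i) Y}
      = real (card (F \<inter> {x. \<not> lin_functional n k (fst x) (\<lambda>i. \<not> snd x i) Y})) / real (card F)"
    using fF neF by (simp add: measure_pmf_of_set)
  also have "\<dots> \<le> real (card (LS n k)) * (real (card (EE k)) - 1) / (real (card (LS n k)) * real (card (EE k)))"
    unfolding den of_nat_mult by (rule divide_right_mono[OF num]) simp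
  also have "\<dots> = 1 - 1 / real (card (EE k))" using cL cE1 by (simp add: field_simps)
  also have "\<dots> \<le> 1 - 1/2^k"
  proof -
    have "real (card (EE k)) \<le> 2^k" using cE2 by (metis of_nat_le_iff of_nat_numeral of_nat_power)
    then have "1/2^k \<le> 1 / real (card (EE k))" using cE1 by (intro divide_left_mono) auto
    then show ?thesis by simp
  qed
  finally show ?thesis unfolding F_def .
qed



lemma card_MI: "card (monomial_index n k) \<le> Nk n k"
proof -
  have "monomial_index n k \<subseteq> (\<Union>i\<in>{..k}. {S. S \<subseteq> {..<n} \<and> card S = i})"
    by (auto simp: monomial_index_def)
  then have "card (monomial_index n k) \<le> card (\<Union>i\<in>{..k}. {S. S \<subseteq> {..<n} \<and> card S = i})"
    by (intro card_mono) auto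
  also have "\<dots> \<le> (\<Sum>i\<le>k. card {S. S \<subseteq> {..<n} \<and> card S = i})" by (rule card_UN_le) simp
  also have "\<dots> = Nk n k" unfolding Nk_def by (simp add: n_subsets)
  finally show ?thesis .
qed

lemma lf_restrict:
  "lin_functional n k L \<alpha> (\<lambda>S. S \<in> monomial_index n k \<and> Y S) = lin_functional n k L \<alpha> Y"
  unfolding lin_functional_def by (rule arg_cong[where f="\<lambda>x. odd (card x)"]) auto

lemma prob_bound:
  assumes "k \<le> n"
  shows "measure_pmf.prob (data_pmf n k m) {d. system_solvable n k m d}
     \<le> 2 ^ (Nk n k) * (1 - 1/2^k) ^ m"
proof -
  define MI where "MI = monomial_index n k"
  define Ys where "Ys = {Y. Y {} \<and> (\<forall>S. Y S \<longrightarrow> S \<in> MI)}"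
  define Bs where "Bs = (\<lambda>Y. {x::(nat \<Rightarrow> nat set) \<times> (nat \<Rightarrow> bool). \<not> lin_functional n k (fst x) (\<lambda>i. \<not> snd x i) Y})"
  define q :: real where "q = 1 - 1/2^k"
  have fMI: "finite MI" unfolding MI_def by (rule finite_MI)
  have Ysub: "Ys \<subseteq> (\<lambda>T S. S \<in> T) ` Pow MI"
  proof
    fix Y assume "Y \<in> Ys"
    then have "Y = (\<lambda>S. S \<in> {S. Y S})" "{S. Y S} \<in> Pow MI" by (auto simp: Ys_def)
    then show "Y \<in> (\<lambda>T S. S \<in> T) ` Pow MI" by blast
  qed
  have fYs: "finite Ys" using Ysub fMI by (meson finite_Pow_iff finite_imageI finite_subset)
  have cYs: "card Ys \<le> 2 ^ Nk n k"
  proof -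
    have "card Ys \<le> card ((\<lambda>T S. S \<in> T) ` Pow MI)" using Ysub fMI by (intro card_mono) auto
    also have "\<dots> \<le> card (Pow MI)" by (rule card_image_le) (simp add: fMI)
    also have "\<dots> = 2 ^ card MI" using fMI by (simp add: card_Pow)
    also have "\<dots> \<le> 2 ^ Nk n k" using card_MI unfolding MI_def by (intro power_increasing) auto
    finally show ?thesis .
  qed
  have sub: "{d. system_solvable n k m d} \<subseteq> (\<Union>Y\<in>Ys. Pi {..<m} (\<lambda>_. Bs Y))"
  proof
    fix d assume "d \<in> {d. system_solvable n k m d}"
    then obtain Y0 where Y0: "Y0 {}" "\<forall>j<m. \<not> lin_functional n k (fst (d j)) (\<lambda>i. \<not> snd (d j) i) Y0"
      by (auto simp: system_solvable_def)
    define Y' where "Y' = (\<lambda>S. S \<in> MI \<and> Y0 S)"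
    have "{} \<in> MI" by (simp add: MI_def monomial_index_def)
    then have "Y' \<in> Ys" using Y0 by (auto simp: Ys_def Y'_def)
    moreover have "d \<in> Pi {..<m} (\<lambda>_. Bs Y')"
      using Y0 by (auto simp: Bs_def Y'_def MI_def lf_restrict)
    ultimately show "d \<in> (\<Union>Y\<in>Ys. Pi {..<m} (\<lambda>_. Bs Y))" by blast
  qed
  have each: "measure_pmf.prob (data_pmf n k m) (Pi {..<m} (\<lambda>_. Bs Y)) \<le> q ^ m" if "Y \<in> Ys" for Y
  proof -
    have "measure_pmf.prob (data_pmf n k m) (Pi {..<m} (\<lambda>_. Bs Y))
       = (\<Prod>j\<in>{..<m}. measure_pmf.prob (pmf_of_set (flat_data n k)) (Bs Y))"
      unfolding data_pmf_def by (rule measure_Pi_pmf_Pi) simp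
    also have "\<dots> = measure_pmf.prob (pmf_of_set (flat_data n k)) (Bs Y) ^ m" by simp
    also have "\<dots> \<le> q ^ m"
      using one_bound[OF assms, of Y] that unfolding Bs_def q_def Ys_def
      by (intro power_mono) auto
    finally show ?thesis .
  qed
  have "measure_pmf.prob (data_pmf n k m) {d. system_solvable n k m d}
      \<le> measure_pmf.prob (data_pmf n k m) (\<Union>Y\<in>Ys. Pi {..<m} (\<lambda>_. Bs Y))"
    using sub by (intro measure_pmf.finite_measure_mono) auto
  also have "\<dots> \<le> (\<Sum>Y\<in>Ys. measure_pmf.prob (data_pmf n k m) (Pi {..<m} (\<lambda>_. Bs Y)))"
    using fYs by (intro measure_pmf.finite_measure_subadditive_finite) auto
  also have "\<dots> \<le> (\<Sum>Y\<in>Ys. q ^ m)" by (rule sum_mono) (rule each)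
  also have "\<dots> = real (card Ys) * q ^ m" by simp
  also have "\<dots> \<le> 2 ^ Nk n k * q ^ m"
  proof -
    have "real (card Ys) \<le> 2 ^ Nk n k" using cYs by (metis of_nat_le_iff of_nat_numeral of_nat_power)
    moreover have "q ^ m \<ge> 0" unfolding q_def by simp
    ultimately show ?thesis by (rule mult_right_mono)
  qed
  finally show ?thesis unfolding q_def .
qed



lemma Nk_ge: "k \<ge> 1 \<Longrightarrow> n \<le> Nk n k"
proof -
  assume "k \<ge> 1"
  then have "n choose 1 \<le> (\<Sum>i\<le>k. n choose i)" by (intro member_le_sum) auto
  then show ?thesis by (simp add: Nk_def)
qed

theorem mainTheorem7:
  fixes k :: nat and \<Delta> :: real
  assumes "k \<ge> 1"
    and "\<Delta> > ln (1/2) / ln (1 - 2 powr (- real k))"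
  shows "(\<lambda>n. measure_pmf.prob (data_pmf n k (nat \<lceil>\<Delta> * real (Nk n k)\<rceil>))
                {d. system_solvable n k (nat \<lceil>\<Delta> * real (Nk n k)\<rceil>) d})
         \<longlonglongrightarrow> 0"
proof -
  define q :: real where "q = 1 - 1/2^k"
  have pk: "2 powr (- real k) = 1/2^k" by (simp add: powr_minus powr_realpow divide_inverse)
  have q2: "(2::real)^k \<ge> 2" using assms(1)
    by (metis power_increasing power_one_right zero_less_numeral less_imp_le one_le_numeral)
  have q0: "0 < q" "q < 1" unfolding q_def using q2 by (auto simp: field_simps)
  have lnq: "ln q < 0" using q0 by simp
  have D: "\<Delta> > ln (1/2) / ln q" using assms(2) unfolding pk q_def .
  have "\<Delta> * ln q < ln (1/2)"
    using D lnq by (simp add: divide_less_eq mult.commute)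
  then have cneg: "ln 2 + \<Delta> * ln q < 0" by (simp add: ln_div)
  have Dpos: "\<Delta> > 0"
  proof -
    have "ln (1/2::real) < 0" by simp
    then have "ln (1/2) / ln q > 0" using lnq by (simp add: divide_neg_neg)
    then show ?thesis using D by linarith
  qed
  define c where "c = ln 2 + \<Delta> * ln q"
  have bound: "measure_pmf.prob (data_pmf n k (nat \<lceil>\<Delta> * real (Nk n k)\<rceil>))
                {d. system_solvable n k (nat \<lceil>\<Delta> * real (Nk n k)\<rceil>) d} \<le> exp c ^ n"
    if "n \<ge> k" for n
  proof -
    define N where "N = real (Nk n k)"
    define m where "m = nat \<lceil>\<Delta> * N\<rceil>"
    have mge: "real m \<ge> \<Delta> * N" unfolding m_def by linarith
    have "measure_pmf.prob (data_pmf n k m) {d. system_solvable n k m d} \<le> 2 ^ (Nk n k) * q ^ m"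
      using prob_bound[OF that] unfolding q_def .
    also have "\<dots> = 2 powr N * q powr (real m)"
      using q0 by (simp add: powr_realpow N_def)
    also have "\<dots> \<le> 2 powr N * q powr (\<Delta> * N)"
      using mge q0 by (intro mult_left_mono powr_mono') auto
    also have "\<dots> = exp (c * N)"
      using q0 by (simp add: powr_def c_def algebra_simps exp_add)
    also have "\<dots> \<le> exp (c * real n)"
    proof -
      have "real n \<le> N" unfolding N_def using Nk_ge[OF assms(1)] by simp
      then have "c * N \<le> c * real n" using cneg unfolding c_def by (intro mult_left_mono_neg) auto
      then show ?thesis by simp
    qed
    also have "\<dots> = exp c ^ n" by (simp add: exp_of_nat_mult[symmetric] mult.commute)
    finally show ?thesis unfolding m_def N_def .
  qed
  show ?thesis
  proof (rule tendsto_sandwich[where f="\<lambda>_. 0" and h="\<lambda>n. exp c ^ n"])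
    show "\<forall>\<^sub>F n in sequentially. 0 \<le> measure_pmf.prob (data_pmf n k (nat \<lceil>\<Delta> * real (Nk n k)\<rceil>))
                {d. system_solvable n k (nat \<lceil>\<Delta> * real (Nk n k)\<rceil>) d}" by simp
    show "\<forall>\<^sub>F n in sequentially. measure_pmf.prob (data_pmf n k (nat \<lceil>\<Delta> * real (Nk n k)\<rceil>))
                {d. system_solvable n k (nat \<lceil>\<Delta> * real (Nk n k)\<rceil>) d} \<le> exp c ^ n"
      using bound by (intro eventually_sequentiallyI[of k]) auto
    show "(\<lambda>_. 0::real) \<longlonglongrightarrow> 0" by simp
    show "(\<lambda>n. exp c ^ n) \<longlonglongrightarrow> 0" using cneg unfolding c_def by (intro LIMSEQ_power_zero) simp
  qed
qed

end
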